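(* Let $f:\mathbb{R}^2\to\mathbb{R}^2$ be $C^1$. Let $R$ be a connected component of $\mathbb{R}^2\setminus f^{-1}(f(S)\cup C(f,\infty))$ and let $\Omega$ be a connected component of $\mathbb{R}^2\setminus(f(S)\cup C(f,\infty))$ such that $f(z)\in\Omega$ for some $z\in R$. Let $w\in\partial\Omega$ satisfy: (i) $w\notin C(f|_R,\infty)$; (ii) $f^{-1}(w)\cap\partial R\cap S=\varnothing$; (iii) $f^{-1}(w)\cap\partial R\neq\varnothing$; and (iv) for each $\zeta\in f^{-1}(w)\cap\partial R$ there is a neighborhood $U_\zeta$ of $\zeta$ with $f(U_\zeta\setminus R)\cap\Omega=\varnothing$. Then $w$ has exactly $\mathrm{Val}(f|_R,\Omega)$ distinct preimages on $\partial R$.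
   Context: Write $f=(u,v)$; $J_f=u_xv_y-u_yv_x$ and $S=\{z\in\mathbb{R}^2: J_f(z)=0\}$. For a function $g$ defined on a set $D\subseteq\mathbb{R}^2$, $C(g,\infty)$ is the set of finite points $\zeta$ for which there is a sequence $(z_n)\subset D$ with $|z_n|\to\infty$ and $g(z_n)\to\zeta$. For $W\subseteq\mathbb{R}^2$, $\mathrm{Val}(f|_R,W)=\sup_{w\in W}\#\{z\in R: f(z)=w\}$. *)

theory Defs
  imports "HOL-Analysis.Analysis" "HOL-Library.Extended_Nat"
begin

text \<open>Jacobian determinant of f = (u,v) at z, from its derivative D = f' z:
  J = u_x v_y - u_y v_x, where u_x = (D e1)$1, v_x = (D e1)$2, u_y = (D e2)$1, v_y = (D e2)$2.\<close>
definition jac :: "(real^2 \<Rightarrow> ((real^2) \<Rightarrow>\<^sub>L (real^2))) \<Rightarrow> real^2 \<Rightarrow> real" where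
  "jac f' z = (let D = blinfun_apply (f' z) in
     (D (axis 1 1)) $ 1 * (D (axis 2 1)) $ 2 - (D (axis 2 1)) $ 1 * (D (axis 1 1)) $ 2)"

definition critset :: "(real^2 \<Rightarrow> ((real^2) \<Rightarrow>\<^sub>L (real^2))) \<Rightarrow> (real^2) set" where
  "critset f' = {z. jac f' z = 0}"

definition cluster_inf :: "(real^2 \<Rightarrow> real^2) \<Rightarrow> (real^2) set \<Rightarrow> (real^2) set" where
  "cluster_inf g D = {\<zeta>. \<exists>zs. (\<forall>n. zs n \<in> D) \<and> filterlim (\<lambda>n. norm (zs n)) at_top sequentially
                          \<and> ((\<lambda>n. g (zs n)) \<longlongrightarrow> \<zeta>) sequentially}"

definition ecount :: "'a set \<Rightarrow> enat" where
  "ecount A = (if finite A then enat (card A) else \<infinity>)"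

definition Val :: "(real^2 \<Rightarrow> real^2) \<Rightarrow> (real^2) set \<Rightarrow> (real^2) set \<Rightarrow> enat" where
  "Val f R W = (SUP w\<in>W. ecount {z\<in>R. f z = w})"

end

theory Submission
  imports Defs
begin

lemma cluster_bound:
  fixes f :: "real^2 \<Rightarrow> real^2"
  assumes "y \<notin> cluster_inf f R"
  shows "\<exists>M e. e > 0 \<and> (\<forall>z\<in>R. dist (f z) y < e \<longrightarrow> norm z \<le> M)"
proof (rule ccontr)
  assume "\<not> ?thesis"
  then have "\<forall>n::nat. \<exists>z\<in>R. dist (f z) y < inverse (Suc n) \<and> norm z > real n"
    by (metis inverse_positive_iff_positive not_le of_nat_0_less_iff zero_less_Suc)
  then obtain zs where zs: "\<And>n. zs n \<in> R" "\<And>n. dist (f (zs n)) y < inverse (Suc n)"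
     "\<And>n. norm (zs n) > real n"
    by metis
  have "filterlim (\<lambda>n. norm (zs n)) at_top sequentially"
    by (rule filterlim_at_top_mono[OF filterlim_real_sequentially])
       (simp add: less_imp_le[OF zs(3)])
  moreover have "((\<lambda>n. f (zs n)) \<longlongrightarrow> y) sequentially"
  proof (rule tendstoI)
    fix e :: real assume "e > 0"
    then obtain N where N: "inverse (Suc N) < e"
      using reals_Archimedean by blast
    show "\<forall>\<^sub>F n in sequentially. dist (f (zs n)) y < e"
      unfolding eventually_sequentially
    proof (intro exI allI impI)
      fix n assume "N \<le> n"
      then have "inverse (real (Suc n)) \<le> inverse (Suc N)"
        by (simp add: le_imp_inverse_le)
      then show "dist (f (zs n)) y < e" using zs(2)[of n] N by linarith
    qed
  qed
  ultimately have "y \<in> cluster_inf f R" unfolding cluster_inf_def using zs(1) by blast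
  with assms show False by blast
qed

lemma inj_of_jac:
  fixes D :: "(real^2) \<Rightarrow>\<^sub>L (real^2)"
  assumes "(let D = blinfun_apply D in
     (D (axis 1 1)) $ 1 * (D (axis 2 1)) $ 2 - (D (axis 2 1)) $ 1 * (D (axis 1 1)) $ 2) \<noteq> 0"
  shows "inj (blinfun_apply D)"
proof -
  let ?a = "(D (axis 1 1)) $ 1" and ?b = "(D (axis 2 1)) $ 1"
  let ?c = "(D (axis 1 1)) $ 2" and ?d = "(D (axis 2 1)) $ 2"
  have J: "?a * ?d - ?b * ?c \<noteq> 0" using assms by (simp add: Let_def)
  have dec: "x = x$1 *\<^sub>R axis 1 1 + x$2 *\<^sub>R axis 2 1" for x :: "real^2"
    by (simp add: vec_eq_iff forall_2 axis_def)
  have Dx: "D x = x$1 *\<^sub>R D (axis 1 1) + x$2 *\<^sub>R D (axis 2 1)" for x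
    by (subst dec) (simp add: blinfun.add_right blinfun.scaleR_right)
  have "x = 0" if "D x = 0" for x
  proof -
    have e1: "x$1 * ?a + x$2 * ?b = 0" using arg_cong[OF that, of "\<lambda>v. v$1"] Dx[of x] by simp
    have e2: "x$1 * ?c + x$2 * ?d = 0" using arg_cong[OF that, of "\<lambda>v. v$2"] Dx[of x] by simp
    have "x$1 * (?a * ?d - ?b * ?c) = ?d * (x$1 * ?a + x$2 * ?b) - ?b * (x$1 * ?c + x$2 * ?d)"
      by (simp add: algebra_simps)
    then have "x$1 = 0" using e1 e2 J by simp
    moreover have "x$2 * (?a * ?d - ?b * ?c) = ?a * (x$1 * ?c + x$2 * ?d) - ?c * (x$1 * ?a + x$2 * ?b)"
      by (simp add: algebra_simps)
    then have "x$2 = 0" using e1 e2 J by simp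
    ultimately show ?thesis by (simp add: vec_eq_iff forall_2)
  qed
  then show ?thesis
    using linear_injective_0[OF bounded_linear.linear[OF blinfun.bounded_linear_right]] by blast
qed

lemma local_homeo:
  fixes f :: "real^2 \<Rightarrow> real^2" and f' :: "real^2 \<Rightarrow> ((real^2) \<Rightarrow>\<^sub>L (real^2))"
  assumes deriv: "\<And>z. (f has_derivative blinfun_apply (f' z)) (at z)"
    and C1: "continuous_on UNIV f'"
    and J: "jac f' \<zeta> \<noteq> 0" and W: "open W" "\<zeta> \<in> W"
  shows "\<exists>U. open U \<and> \<zeta> \<in> U \<and> U \<subseteq> W \<and> inj_on f U \<and> open (f ` U)"
proof -
  have inj: "inj (blinfun_apply (f' \<zeta>))" using inj_of_jac J unfolding jac_def by blast
  have lin: "linear (blinfun_apply (f' \<zeta>))" by (rule bounded_linear.linear[OF blinfun.bounded_linear_right])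
  obtain g where g: "linear g" "g \<circ> blinfun_apply (f' \<zeta>) = id"
    using linear_injective_left_inverse[OF lin inj] by blast
  have bl: "bounded_linear g" using g(1) linear_conv_bounded_linear by blast
  have inv: "Blinfun g o\<^sub>L f' \<zeta> = id_blinfun"
    by (rule blinfun_eqI) (use g bl in \<open>auto simp: bounded_linear_Blinfun_apply fun_eq_iff\<close>)
  obtain U' V h where U': "open U'" "\<zeta> \<in> U'" "open V" "homeomorphism U' V f h"
    using inverse_function_theorem[OF open_UNIV deriv C1 UNIV_I inv] by metis
  let ?U = "U' \<inter> W"
  have "inj_on f ?U"
    by (rule inj_on_inverseI[where g=h]) (use homeomorphism_apply1[OF U'(4)] in auto)
  moreover have "openin (top_of_set U') ?U"
    using W(1) by (simp add: openin_open_Int)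
  then have "openin (top_of_set V) (f ` ?U)"
    by (rule homeomorphism_imp_open_map[OF U'(4)])
  then have "open (f ` ?U)"
    using U'(3) openin_open_trans by blast
  ultimately show ?thesis using U' W by blast
qed


lemma local_count:
  fixes f :: "real^2 \<Rightarrow> real^2"
  assumes contf: "continuous_on UNIV f"
    and notcl: "y \<notin> cluster_inf f R"
    and H: "\<And>\<zeta> W. \<zeta> \<in> f -` {y} \<inter> closure R \<Longrightarrow> open W \<Longrightarrow> \<zeta> \<in> W \<Longrightarrow>
              \<exists>U. open U \<and> \<zeta> \<in> U \<and> U \<subseteq> W \<and> inj_on f U \<and> open (f ` U)"
    and G: "\<And>\<zeta>. \<zeta> \<in> f -` {y} \<inter> closure R \<Longrightarrow> \<exists>U. open U \<and> \<zeta> \<in> U \<and> f ` (U - R) \<inter> \<Omega> = {}"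
  shows "finite (f -` {y} \<inter> closure R) \<and> (\<exists>N. open N \<and> y \<in> N \<and>
     (\<forall>y'\<in>N \<inter> \<Omega>. finite (f -` {y'} \<inter> R) \<and> card (f -` {y'} \<inter> R) = card (f -` {y} \<inter> closure R)))"
proof -
  define P where "P = f -` {y} \<inter> closure R"
  obtain M e where e: "e > 0" and Me: "\<And>z. z \<in> R \<Longrightarrow> dist (f z) y < e \<Longrightarrow> norm z \<le> M"
    using cluster_bound[OF notcl] by blast
  have ca: "continuous (at x) f" for x
    using contf by (simp add: continuous_on_eq_continuous_at)
  have Pb: "P \<subseteq> cball 0 (M+1)"
  proof
    fix \<zeta> assume "\<zeta> \<in> P"
    then have fz: "f \<zeta> = y" "\<zeta> \<in> closure R" by (auto simp: P_def)
    obtain d where d: "d > 0" "\<And>x. dist x \<zeta> < d \<Longrightarrow> dist (f x) (f \<zeta>) < e"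
      using ca[of \<zeta>] e unfolding continuous_at_eps_delta by blast
    obtain z where z: "z \<in> R" "dist z \<zeta> < min d 1"
      using fz(2) d(1) unfolding closure_approachable by (metis min_less_iff_conj zero_less_one)
    have "norm z \<le> M" using Me[OF z(1)] d(2)[of z] z(2) fz(1) by simp
    moreover have "norm \<zeta> \<le> norm z + dist z \<zeta>"
      by (metis dist_commute dist_norm norm_triangle_sub)
    ultimately show "\<zeta> \<in> cball 0 (M+1)" using z(2) by simp
  qed
  have Pcl: "closed P"
    unfolding P_def by (intro closed_Int continuous_closed_vimage) (auto simp: ca)
  have Pc: "compact P"
    using Pb Pcl bounded_cball bounded_subset compact_eq_bounded_closed by blast
  have "\<forall>\<zeta>\<in>P. \<exists>U. open U \<and> \<zeta> \<in> U \<and> inj_on f U"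
    using H[of _ UNIV] unfolding P_def by blast
  then obtain U where U: "\<And>\<zeta>. \<zeta> \<in> P \<Longrightarrow> open (U \<zeta>) \<and> \<zeta> \<in> U \<zeta> \<and> inj_on f (U \<zeta>)"
    by metis
  obtain F where F: "F \<subseteq> P" "finite F" "P \<subseteq> (\<Union>c\<in>F. U c)"
    by (rule compactE_image[OF Pc, of P U]) (use U in auto)
  have "P \<subseteq> F"
  proof
    fix x assume x: "x \<in> P"
    then obtain c where c: "c \<in> F" "x \<in> U c" using F(3) by blast
    have "f x = f c" using x c F(1) by (auto simp: P_def)
    then show "x \<in> F" using U[of c] c F(1) by (metis inj_onD subsetD)
  qed
  then have finP: "finite P" using F(2) finite_subset by blast
  have "\<forall>\<zeta>\<in>P. \<exists>d>0. \<forall>x\<in>P. x \<noteq> \<zeta> \<longrightarrow> d \<le> dist \<zeta> x"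
    using finite_set_avoid[OF finP] by blast
  then obtain d where d: "\<And>\<zeta>. \<zeta> \<in> P \<Longrightarrow> d \<zeta> > 0"
     "\<And>\<zeta> x. \<zeta> \<in> P \<Longrightarrow> x \<in> P \<Longrightarrow> x \<noteq> \<zeta> \<Longrightarrow> d \<zeta> \<le> dist \<zeta> x"
    by metis
  have "\<forall>\<zeta>\<in>P. \<exists>U. open U \<and> \<zeta> \<in> U \<and> U \<subseteq> ball \<zeta> (d \<zeta> / 2) \<and> inj_on f U \<and> open (f ` U)
           \<and> f ` (U - R) \<inter> \<Omega> = {}"
  proof
    fix \<zeta> assume z: "\<zeta> \<in> P"
    obtain V where V: "open V" "\<zeta> \<in> V" "f ` (V - R) \<inter> \<Omega> = {}" using G z unfolding P_def by blast
    obtain U where "open U" "\<zeta> \<in> U" "U \<subseteq> V \<inter> ball \<zeta> (d \<zeta> / 2)" "inj_on f U" "open (f ` U)"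
      using H[of \<zeta> "V \<inter> ball \<zeta> (d \<zeta> / 2)"] z V d(1)[OF z] unfolding P_def by auto
    moreover have "f ` (U - R) \<inter> \<Omega> = {}" using V(3) \<open>U \<subseteq> _\<close> by blast
    ultimately show "\<exists>U. open U \<and> \<zeta> \<in> U \<and> U \<subseteq> ball \<zeta> (d \<zeta> / 2) \<and> inj_on f U \<and> open (f ` U)
           \<and> f ` (U - R) \<inter> \<Omega> = {}" by blast
  qed
  then obtain V where V: "\<And>\<zeta>. \<zeta> \<in> P \<Longrightarrow> open (V \<zeta>) \<and> \<zeta> \<in> V \<zeta> \<and> V \<zeta> \<subseteq> ball \<zeta> (d \<zeta> / 2)
         \<and> inj_on f (V \<zeta>) \<and> open (f ` V \<zeta>) \<and> f ` (V \<zeta> - R) \<inter> \<Omega> = {}"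
    by metis
  have disj: "V \<zeta> \<inter> V \<eta> = {}" if "\<zeta> \<in> P" "\<eta> \<in> P" "\<zeta> \<noteq> \<eta>" for \<zeta> \<eta>
  proof (rule ccontr)
    assume "V \<zeta> \<inter> V \<eta> \<noteq> {}"
    then obtain x where "x \<in> V \<zeta>" "x \<in> V \<eta>" by blast
    then have "x \<in> ball \<zeta> (d \<zeta> / 2)" "x \<in> ball \<eta> (d \<eta> / 2)"
      using V[OF that(1)] V[OF that(2)] by blast+
    then have "dist \<zeta> x < d \<zeta> / 2" "dist \<eta> x < d \<eta> / 2" by simp_all
    then have "dist \<zeta> \<eta> < d \<zeta> / 2 + d \<eta> / 2"
      by (metis add_strict_mono dist_commute dist_triangle_lt)
    moreover have "d \<zeta> \<le> dist \<zeta> \<eta>" "d \<eta> \<le> dist \<eta> \<zeta>" using d(2) that by auto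
    ultimately show False by (simp add: dist_commute)
  qed
  define K where "K = (cball 0 M \<inter> closure R) - (\<Union>\<zeta>\<in>P. V \<zeta>)"
  have "closed (closure R - (\<Union>\<zeta>\<in>P. V \<zeta>))"
    using V by (intro closed_Diff) (auto intro!: open_UN)
  then have "compact K"
    unfolding K_def Int_Diff by (intro compact_Int_closed compact_cball)
  then have "compact (f ` K)"
    using compact_continuous_image continuous_on_subset[OF contf] by blast
  moreover have yK: "y \<notin> f ` K"
  proof
    assume "y \<in> f ` K"
    then obtain x where "x \<in> K" "f x = y" by blast
    then have "x \<in> P" "x \<notin> V x" unfolding K_def P_def by auto
    then show False using V by blast
  qed
  ultimately obtain e' where e': "e' > 0" "ball y e' \<subseteq> - (f ` K)"
    using compact_imp_closed open_contains_ball by (metis ComplI open_Compl)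
  define N where "N = ball y (min e e') \<inter> (\<Inter>\<zeta>\<in>P. f ` V \<zeta>)"
  have "open N" unfolding N_def using finP V by (intro open_Int open_INT) auto
  moreover have "y \<in> N" unfolding N_def using e e'(1) V by (auto simp: P_def)
  moreover have "finite (f -` {y'} \<inter> R) \<and> card (f -` {y'} \<inter> R) = card P" if y': "y' \<in> N \<inter> \<Omega>" for y'
  proof -
    have "\<forall>\<zeta>\<in>P. \<exists>x\<in>V \<zeta>. f x = y'" using y' unfolding N_def by force
    then obtain g where g: "\<And>\<zeta>. \<zeta> \<in> P \<Longrightarrow> g \<zeta> \<in> V \<zeta> \<and> f (g \<zeta>) = y'" by metis
    have gR: "g \<zeta> \<in> R" if "\<zeta> \<in> P" for \<zeta>
    proof (rule ccontr)
      assume "g \<zeta> \<notin> R"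
      then have "y' \<in> f ` (V \<zeta> - R)" using g[OF that] by force
      then show False using V[OF that] y' by blast
    qed
    have "f -` {y'} \<inter> R = g ` P"
    proof
      show "g ` P \<subseteq> f -` {y'} \<inter> R" using g gR by auto
      show "f -` {y'} \<inter> R \<subseteq> g ` P"
      proof
        fix x assume x: "x \<in> f -` {y'} \<inter> R"
        have "dist (f x) y < min e e'" using x y' unfolding N_def by (auto simp: dist_commute)
        then have nx: "norm x \<le> M" using Me x by auto
        have "x \<in> (\<Union>\<zeta>\<in>P. V \<zeta>)"
        proof (rule ccontr)
          assume "x \<notin> (\<Union>\<zeta>\<in>P. V \<zeta>)"
          then have "x \<in> K" unfolding K_def using nx x closure_subset by auto
          moreover have "f x \<in> ball y e'" using \<open>dist (f x) y < min e e'\<close> by (simp add: dist_commute)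
          ultimately show False using e'(2) by blast
        qed
        then obtain \<zeta> where "\<zeta> \<in> P" "x \<in> V \<zeta>" by blast
        then have "x = g \<zeta>" using g V x by (metis IntD1 inj_onD vimage_singleton_eq)
        then show "x \<in> g ` P" using \<open>\<zeta> \<in> P\<close> by blast
      qed
    qed
    moreover have "inj_on g P"
      by (rule inj_onI) (metis disjoint_iff disj g)
    ultimately show ?thesis using finP by (simp add: card_image)
  qed
  ultimately show ?thesis using finP unfolding P_def by blast
qed


lemma A_closed:
  fixes f :: "real^2 \<Rightarrow> real^2"
  assumes contf: "continuous_on UNIV f" and S: "closed S"
  shows "closed (f ` S \<union> cluster_inf f UNIV)"
proof -
  have "open (- (f ` S \<union> cluster_inf f UNIV))"
    unfolding open_contains_ball
  proof
    fix y assume y: "y \<in> - (f ` S \<union> cluster_inf f UNIV)"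
    obtain M e where e: "e > 0" and Me: "\<And>z. dist (f z) y < e \<Longrightarrow> norm z \<le> M"
      using cluster_bound[of y f UNIV] y by blast
    have "compact (f ` (S \<inter> cball 0 M))"
      using S contf by (intro compact_continuous_image) (auto intro: continuous_on_subset compact_Int_closed[OF compact_cball] simp: Int_commute)
    moreover have "y \<notin> f ` (S \<inter> cball 0 M)" using y by auto
    ultimately obtain e' where e': "e' > 0" "ball y e' \<subseteq> - (f ` (S \<inter> cball 0 M))"
      using compact_imp_closed open_contains_ball by (metis ComplI open_Compl)
    have "ball y (min e e') \<subseteq> - (f ` S \<union> cluster_inf f UNIV)"
    proof
      fix y'' assume y'': "y'' \<in> ball y (min e e')"
      have "y'' \<notin> f ` S"
      proof
        assume "y'' \<in> f ` S"
        then obtain z where z: "z \<in> S" "f z = y''" by blast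
        then have "dist (f z) y < e" using y'' by (simp add: dist_commute)
        then have "norm z \<le> M" by (rule Me)
        then have "y'' \<in> f ` (S \<inter> cball 0 M)" using z by auto
        moreover have "y'' \<in> ball y e'" using y'' by simp
        ultimately show False using e'(2) by blast
      qed
      moreover have "y'' \<notin> cluster_inf f UNIV"
      proof
        assume "y'' \<in> cluster_inf f UNIV"
        then obtain zs where zs: "filterlim (\<lambda>n. norm (zs n)) at_top sequentially"
          "((\<lambda>n. f (zs n)) \<longlongrightarrow> y'') sequentially"
          unfolding cluster_inf_def by blast
        have dy: "dist y'' y < e" using y'' by (simp add: dist_commute)
        have "eventually (\<lambda>n. dist (f (zs n)) y'' < e - dist y'' y) sequentially"
          using tendstoD[OF zs(2)] dy by simp
        moreover have "eventually (\<lambda>n. M < norm (zs n)) sequentially"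
          using zs(1) unfolding filterlim_at_top_dense by blast
        ultimately have "eventually (\<lambda>n. dist (f (zs n)) y'' < e - dist y'' y \<and> M < norm (zs n)) sequentially"
          by (rule eventually_conj)
        then obtain n where n: "dist (f (zs n)) y'' < e - dist y'' y" "M < norm (zs n)"
          unfolding eventually_sequentially by blast
        have "dist (f (zs n)) y < e" using n(1) dist_triangle[of "f (zs n)" y y''] by linarith
        then show False using Me n(2) by fastforce
      qed
      ultimately show "y'' \<in> - (f ` S \<union> cluster_inf f UNIV)" by blast
    qed
    then show "\<exists>r>0. ball y r \<subseteq> - (f ` S \<union> cluster_inf f UNIV)" using e e' by (metis min_less_iff_conj)
  qed
  then show ?thesis by (simp add: closed_def)
qed

lemma critset_closed:
  fixes f' :: "real^2 \<Rightarrow> ((real^2) \<Rightarrow>\<^sub>L (real^2))"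
  assumes C1: "continuous_on UNIV f'"
  shows "closed (critset f')"
proof -
  have c: "continuous_on UNIV (\<lambda>z. blinfun_apply (f' z) v $ i)" for v i
    by (intro continuous_intros C1)
  have "continuous_on UNIV (jac f')"
    unfolding jac_def Let_def by (intro continuous_intros c)
  then show ?thesis
    unfolding critset_def using closed_Collect_eq[of "jac f'" "\<lambda>_. 0"] by auto
qed


theorem theorem3p21:
  fixes f :: "real^2 \<Rightarrow> real^2" and f' :: "real^2 \<Rightarrow> ((real^2) \<Rightarrow>\<^sub>L (real^2))"
    and R \<Omega> :: "(real^2) set" and w :: "real^2"
  assumes deriv: "\<And>z. (f has_derivative blinfun_apply (f' z)) (at z)"
    and C1: "continuous_on UNIV f'"
    and R: "R \<in> components (UNIV - f -` (f ` critset f' \<union> cluster_inf f UNIV))"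
    and Omega: "\<Omega> \<in> components (UNIV - (f ` critset f' \<union> cluster_inf f UNIV))"
    and meet: "\<exists>z\<in>R. f z \<in> \<Omega>"
    and w: "w \<in> frontier \<Omega>"
    and i: "w \<notin> cluster_inf f R"
    and ii: "f -` {w} \<inter> frontier R \<inter> critset f' = {}"
    and iii: "f -` {w} \<inter> frontier R \<noteq> {}"
    and iv: "\<forall>\<zeta>\<in>f -` {w} \<inter> frontier R. \<exists>U. open U \<and> \<zeta> \<in> U \<and> f ` (U - R) \<inter> \<Omega> = {}"
  shows "ecount (f -` {w} \<inter> frontier R) = Val f R \<Omega>"
proof -
  define A where "A = f ` critset f' \<union> cluster_inf f UNIV"
  have ca: "continuous (at z) f" for z
    using deriv has_derivative_continuous by blast
  have contf: "continuous_on UNIV f"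
    using ca by (simp add: continuous_at_imp_continuous_on)
  have "closed A" unfolding A_def using A_closed[OF contf critset_closed[OF C1]] .
  then have oA: "open (UNIV - A)" by (simp add: Compl_eq_Diff_UNIV[symmetric] open_Compl)
  have "UNIV - f -` A = f -` (UNIV - A)" by auto
  then have oG: "open (UNIV - f -` A)" using continuous_open_vimage[OF oA ca] by simp
  have R': "R \<in> components (UNIV - f -` A)" using R unfolding A_def .
  have O': "\<Omega> \<in> components (UNIV - A)" using Omega unfolding A_def .
  have openR: "open R" using open_components[OF oG R'] .
  have openO: "open \<Omega>" using open_components[OF oA O'] .
  have RG: "R \<subseteq> UNIV - f -` A" using in_components_subset[OF R'] .
  have OA: "\<Omega> \<subseteq> UNIV - A" using in_components_subset[OF O'] .
  have fRO: "f ` R \<subseteq> \<Omega>"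
  proof (rule components_maximal[OF O'])
    show "connected (f ` R)"
      using in_components_connected[OF R'] contf by (intro connected_continuous_image) (auto intro: continuous_on_subset)
    show "f ` R \<subseteq> UNIV - A" using RG by auto
    show "\<Omega> \<inter> f ` R \<noteq> {}" using meet by blast
  qed
  have wO: "w \<notin> \<Omega>" using w openO by (simp add: frontier_def interior_open)
  have clR: "\<zeta> \<in> R" if z: "\<zeta> \<in> closure R" "\<zeta> \<notin> f -` A" for \<zeta>
  proof -
    obtain r where r: "r > 0" "ball \<zeta> r \<subseteq> UNIV - f -` A"
      using oG z(2) open_contains_ball by blast
    obtain x where x: "x \<in> R" "dist x \<zeta> < r" using z(1) r(1) unfolding closure_approachable by blast
    have xr: "x \<in> R \<inter> ball \<zeta> r" using x by (simp add: dist_commute)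
    then have "connected (R \<union> ball \<zeta> r)"
      using connected_Un[OF in_components_connected[OF R'] connected_ball] by blast
    then have "R \<union> ball \<zeta> r \<subseteq> R"
      using r RG xr by (intro components_maximal[OF R']) auto
    then show ?thesis using r(1) by auto
  qed
  have clsub: "cluster_inf f R \<subseteq> cluster_inf f UNIV" unfolding cluster_inf_def by blast
  have loc: "\<exists>N. open N \<and> y \<in> N \<and> (\<forall>y'\<in>N \<inter> \<Omega>. finite (f -` {y'} \<inter> R) \<and>
      card (f -` {y'} \<inter> R) = card (f -` {y} \<inter> closure R))" if y: "y \<in> \<Omega>" for y
  proof -
    have yA: "y \<notin> A" using y OA by blast
    have "finite (f -` {y} \<inter> closure R) \<and> (\<exists>N. open N \<and> y \<in> N \<and> (\<forall>y'\<in>N \<inter> \<Omega>. finite (f -` {y'} \<inter> R) \<and>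
      card (f -` {y'} \<inter> R) = card (f -` {y} \<inter> closure R)))"
    proof (rule local_count[OF contf])
      show "y \<notin> cluster_inf f R" using yA clsub unfolding A_def by blast
      fix \<zeta> assume z: "\<zeta> \<in> f -` {y} \<inter> closure R"
      have "jac f' \<zeta> \<noteq> 0"
      proof
        assume "jac f' \<zeta> = 0"
        then have "f \<zeta> \<in> A" unfolding A_def critset_def by blast
        then show False using z yA by auto
      qed
      then show "\<And>W. open W \<Longrightarrow> \<zeta> \<in> W \<Longrightarrow> \<exists>U. open U \<and> \<zeta> \<in> U \<and> U \<subseteq> W \<and> inj_on f U \<and> open (f ` U)"
        using local_homeo[OF deriv C1] by blast
      have "\<zeta> \<in> R" using clR z yA by auto
      then show "\<exists>U. open U \<and> \<zeta> \<in> U \<and> f ` (U - R) \<inter> \<Omega> = {}" using openR by blast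
    qed
    then show ?thesis by blast
  qed
  obtain z0 where z0: "z0 \<in> R" "f z0 \<in> \<Omega>" using meet by blast
  define y0 where "y0 = f z0"
  have y0: "y0 \<in> \<Omega>" using z0 y0_def by simp
  have const: "card (f -` {y} \<inter> R) = card (f -` {y0} \<inter> R)" if y: "y \<in> \<Omega>" for y
  proof (rule connected_induction_simple[where P="\<lambda>x. card (f -` {x} \<inter> R) = card (f -` {y0} \<inter> R)"])
    show "connected \<Omega>" using in_components_connected[OF O'] .
    show "y0 \<in> \<Omega>" "y \<in> \<Omega>" using y0 y by auto
    show "card (f -` {y0} \<inter> R) = card (f -` {y0} \<inter> R)" ..
    fix a assume a: "a \<in> \<Omega>"
    obtain N where N: "open N" "a \<in> N" "\<forall>y'\<in>N \<inter> \<Omega>. finite (f -` {y'} \<inter> R) \<and>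
      card (f -` {y'} \<inter> R) = card (f -` {a} \<inter> closure R)" using loc[OF a] by blast
    show "\<exists>T. openin (top_of_set \<Omega>) T \<and> a \<in> T \<and>
       (\<forall>x\<in>T. \<forall>y\<in>T. card (f -` {x} \<inter> R) = card (f -` {y0} \<inter> R) \<longrightarrow> card (f -` {y} \<inter> R) = card (f -` {y0} \<inter> R))"
      by (rule exI[of _ "\<Omega> \<inter> N"]) (use N a in \<open>auto simp: openin_open_Int\<close>)
  qed
  have finfib: "finite (f -` {y} \<inter> R)" if "y \<in> \<Omega>" for y
    using loc[OF that] that by blast
  define Pw where "Pw = f -` {w} \<inter> closure R"
  have Pw_eq: "Pw = f -` {w} \<inter> frontier R"
  proof
    show "f -` {w} \<inter> frontier R \<subseteq> Pw" unfolding Pw_def frontier_def by auto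
    show "Pw \<subseteq> f -` {w} \<inter> frontier R"
    proof
      fix \<zeta> assume z: "\<zeta> \<in> Pw"
      then have "\<zeta> \<notin> R" using fRO wO unfolding Pw_def by auto
      then show "\<zeta> \<in> f -` {w} \<inter> frontier R" using z openR unfolding Pw_def frontier_def
        by (simp add: interior_open)
    qed
  qed
  have "finite Pw \<and> (\<exists>N. open N \<and> w \<in> N \<and> (\<forall>y'\<in>N \<inter> \<Omega>. finite (f -` {y'} \<inter> R) \<and>
      card (f -` {y'} \<inter> R) = card Pw))"
    unfolding Pw_def
  proof (rule local_count[OF contf i])
    fix \<zeta> assume z: "\<zeta> \<in> f -` {w} \<inter> closure R"
    then have zf: "\<zeta> \<in> f -` {w} \<inter> frontier R" using Pw_eq Pw_def by blast
    then have "jac f' \<zeta> \<noteq> 0" using ii unfolding critset_def by blast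
    then show "\<And>W. open W \<Longrightarrow> \<zeta> \<in> W \<Longrightarrow> \<exists>U. open U \<and> \<zeta> \<in> U \<and> U \<subseteq> W \<and> inj_on f U \<and> open (f ` U)"
      using local_homeo[OF deriv C1] by blast
    show "\<exists>U. open U \<and> \<zeta> \<in> U \<and> f ` (U - R) \<inter> \<Omega> = {}" using iv zf by blast
  qed
  then obtain N where finPw: "finite Pw" and N: "open N" "w \<in> N"
    "\<forall>y'\<in>N \<inter> \<Omega>. finite (f -` {y'} \<inter> R) \<and> card (f -` {y'} \<inter> R) = card Pw" by blast
  have "w \<in> closure \<Omega>" using w by (simp add: frontier_def)
  then have "N \<inter> closure \<Omega> \<noteq> {}" using N by blast
  then obtain y1 where y1: "y1 \<in> N" "y1 \<in> \<Omega>" using open_Int_closure_eq_empty[OF N(1)] by blast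
  have cy: "ecount (f -` {y} \<inter> R) = enat (card Pw)" if "y \<in> \<Omega>" for y
    using finfib[OF that] const[OF that] const[OF y1(2)] N(3) y1 by (simp add: ecount_def)
  have cy': "ecount {z\<in>R. f z = y} = enat (card Pw)" if "y \<in> \<Omega>" for y
  proof -
    have "{z\<in>R. f z = y} = f -` {y} \<inter> R" by auto
    then show ?thesis using cy[OF that] by simp
  qed
  have "Val f R \<Omega> = (SUP y\<in>\<Omega>. enat (card Pw))"
    unfolding Val_def by (rule SUP_cong) (simp_all add: cy')
  also have "\<dots> = enat (card Pw)" using y1 by (intro SUP_const) blast
  also have "\<dots> = ecount (f -` {w} \<inter> frontier R)" using finPw Pw_eq by (simp add: ecount_def)
  finally show ?thesis by simp
qed

end
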